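(* For all $0\le M\le M'<1$ and all constructible Reeb graphs $\mathcal{R}_f,\mathcal{R}_g$, $$d_I^M(\mathcal{R}_f,\mathcal{R}_g)\le d_I^{M'}(\mathcal{R}_f,\mathcal{R}_g)\le \frac{1-M}{1-M'}\,d_I^M(\mathcal{R}_f,\mathcal{R}_g).$$
   Context: A scalar field is a pair $(\mathbb X,f)$ with $\mathbb X$ a topological space and $f:\mathbb X\to\mathbb R$ continuous. Its Reeb graph $\mathcal R_f=(\mathbb X_f,\tilde f)$ is the quotient of $\mathbb X$ by $x\sim y$ iff $f(x)=f(y)=a$ and $x,y$ lie in the same path component of $f^{-1}(a)$, with $\tilde f$ induced by $f$. $(\mathbb X,f)$ is constructible if there are finitely many values $a_1<\dots<a_n$ such that $\mathbb X$ is homeomorphic to the union of $\mathbb V_i\times\{a_i\}$ and $\mathbb E_i\times[a_i,a_{i+1}]$ glued by continuous attaching maps $\mathbb E_i\times\{a_i\}\to\mathbb V_i$, $\mathbb E_i\times\{a_{i+1}\}\to\mathbb V_{i+1}$, with all $\mathbb V_i,\mathbb E_i$ compact and locally path-connected and $f$ the projection to the second coordinate; its Reeb graph is then a finite graph and is called a constructible Reeb graph. A morphism of Reeb graphs is a continuous function-preserving map ($\tilde f=\tilde g\circ\alpha$). An up-path (down-path) is a path along which $\tilde f$ is monotone non-decreasing (non-increasing); its height is the difference of $\tilde f$ at its endpoints. For $\varepsilon\ge 0$, the smoothing $\mathcal S_\varepsilon(\mathcal R_f)$ is the Reeb graph of $(\mathbb X_f\times[-\varepsilon,\varepsilon],(x,t)\mapsto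 \tilde f(x)+t)$, with the natural maps $\eta:\mathcal S_\varepsilon(\mathcal R_f)\to\mathcal S_{\varepsilon'}(\mathcal R_f)$ for $\varepsilon\le\varepsilon'$ ($\eta$ from $\mathcal R_f=\mathcal S_0$ being $x\mapsto[x,0]$). The truncation $T^\tau(\mathcal R)$ removes from $\mathcal R$ all points that do not have both an up-path and a down-path of height $\tau$ starting at them; $\mathcal S^\tau_\varepsilon=T^\tau\mathcal S_\varepsilon$ (a functor for $0<\tau\le2\varepsilon$), and $\eta$ restricts to maps $\mathcal S^\tau_\varepsilon\to\mathcal S^{\tau'}_{\varepsilon'}$ when $0\le\tau'-\tau\le\varepsilon'-\varepsilon$. For $m\in[0,1]$, an $\varepsilon$-interleaving (truncated, parameter $m$) is a pair of function-preserving maps $\phi:\mathcal R_f\to\mathcal S^{m\varepsilon}_\varepsilon(\mathcal R_g)$, $\psi:\mathcal R_g\to\mathcal S^{m\varepsilon}_\varepsilon(\mathcal R_f)$ with $\mathcal S^{m\varepsilon}_\varepsilon[\psi]\circ\phi=\eta:\mathcal R_f\to\mathcal S^{2m\varepsilon}_{2\varepsilon}(\mathcal R_f)$ and $\mathcal S^{m\varepsilon}_\varepsilon[\phi]\circ\psi=\eta:\mathcal R_g\to\mathcal S^{2m\varepsilon}_{2\varepsilon}(\mathcal R_g)$; $d_I^m(\mathcal R_f,\mathcal R_g)$ is the infimum of such $\varepsilon$. For $m=0$ this is the ordinary interleaving distance $d_I$. *)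

theory Defs
  imports "HOL-Analysis.Analysis"
begin

definition qcls :: "'a topology \<Rightarrow> ('a \<Rightarrow> 'a \<Rightarrow> bool) \<Rightarrow> 'a \<Rightarrow> 'a set" where
  "qcls X R x = {y \<in> topspace X. R x y}"

definition quot_top :: "'a topology \<Rightarrow> ('a \<Rightarrow> 'a \<Rightarrow> bool) \<Rightarrow> 'a set topology" where
  "quot_top X R = topology (\<lambda>U. U \<subseteq> qcls X R ` topspace X \<and>
        openin X {x \<in> topspace X. qcls X R x \<in> U})"

lemma istopology_quot: "istopology (\<lambda>U. U \<subseteq> qcls X R ` topspace X \<and>
        openin X {x \<in> topspace X. qcls X R x \<in> U})"
proof -
  have i: "{x \<in> topspace X. qcls X R x \<in> S \<inter> T} =
           {x \<in> topspace X. qcls X R x \<in> S} \<inter> {x \<in> topspace X. qcls X R x \<in> T}" for S T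
    by auto
  have u: "{x \<in> topspace X. qcls X R x \<in> \<Union>K} =
           (\<Union>S\<in>K. {x \<in> topspace X. qcls X R x \<in> S})" for K
    by auto
  show ?thesis
    unfolding istopology_def i u by (auto intro!: openin_Union)
qed

definition reeb_rel :: "'a topology \<Rightarrow> ('a \<Rightarrow> real) \<Rightarrow> 'a \<Rightarrow> 'a \<Rightarrow> bool" where
  "reeb_rel X f x y \<longleftrightarrow> f x = f y \<and>
      path_component_of (subtopology X {z \<in> topspace X. f z = f x}) x y"

definition reeb_top :: "'a topology \<Rightarrow> ('a \<Rightarrow> real) \<Rightarrow> 'a set topology" where
  "reeb_top X f = quot_top X (reeb_rel X f)"

definition reeb_fn :: "'a topology \<Rightarrow> ('a \<Rightarrow> real) \<Rightarrow> 'a set \<Rightarrow> real" where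
  "reeb_fn X f C = f (SOME x. x \<in> C)"

text \<open>The disjoint union of the pieces V_i x {a_i} (tag False) and
  E_i x [a_i, a_(i+1)] (tag True), indices 0-based: a 0 < ... < a (n-1).\<close>
definition pieces_top ::
  "nat \<Rightarrow> (nat \<Rightarrow> real) \<Rightarrow> (nat \<Rightarrow> 'c topology) \<Rightarrow> (nat \<Rightarrow> 'c topology)
     \<Rightarrow> ((nat \<times> bool) \<times> ('c \<times> real)) topology" where
  "pieces_top n a V E = sum_topology
     (\<lambda>(i,b). if b then prod_topology (E i) (subtopology euclideanreal {a i .. a (Suc i)})
              else prod_topology (V i) (subtopology euclideanreal {a i}))
     ({(i, False) | i. i < n} \<union> {(i, True) | i. Suc i < n})"

text \<open>Elementary identifications given by the attaching maps l_i : E_i -> V_i and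
  r_i : E_i -> V_(i+1).\<close>
definition glue_step ::
  "(nat \<Rightarrow> real) \<Rightarrow> (nat \<Rightarrow> 'c \<Rightarrow> 'c) \<Rightarrow> (nat \<Rightarrow> 'c \<Rightarrow> 'c)
     \<Rightarrow> ((nat \<times> bool) \<times> ('c \<times> real)) \<Rightarrow> ((nat \<times> bool) \<times> ('c \<times> real)) \<Rightarrow> bool" where
  "glue_step a l r p q \<longleftrightarrow>
     (\<exists>i e. p = ((i, True), (e, a i)) \<and> q = ((i, False), (l i e, a i))) \<or>
     (\<exists>i e. p = ((i, True), (e, a (Suc i))) \<and> q = ((Suc i, False), (r i e, a (Suc i))))"

definition glue_rel ::
  "(nat \<Rightarrow> real) \<Rightarrow> (nat \<Rightarrow> 'c \<Rightarrow> 'c) \<Rightarrow> (nat \<Rightarrow> 'c \<Rightarrow> 'c)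
     \<Rightarrow> ((nat \<times> bool) \<times> ('c \<times> real)) \<Rightarrow> ((nat \<times> bool) \<times> ('c \<times> real)) \<Rightarrow> bool" where
  "glue_rel a l r = (\<lambda>p q. glue_step a l r p q \<or> glue_step a l r q p)\<^sup>*\<^sup>*"

definition glued_top ::
  "nat \<Rightarrow> (nat \<Rightarrow> real) \<Rightarrow> (nat \<Rightarrow> 'c topology) \<Rightarrow> (nat \<Rightarrow> 'c topology)
     \<Rightarrow> (nat \<Rightarrow> 'c \<Rightarrow> 'c) \<Rightarrow> (nat \<Rightarrow> 'c \<Rightarrow> 'c)
     \<Rightarrow> ((nat \<times> bool) \<times> ('c \<times> real)) set topology" where
  "glued_top n a V E l r = quot_top (pieces_top n a V E) (glue_rel a l r)"

definition glued_proj :: "((nat \<times> bool) \<times> ('c \<times> real)) set \<Rightarrow> real" where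
  "glued_proj C = snd (snd (SOME p. p \<in> C))"

text \<open>(X,f) is a constructible scalar field whose pieces V_i, E_i are spaces on type 'c.\<close>
definition constructible :: "'c itself \<Rightarrow> 'a topology \<Rightarrow> ('a \<Rightarrow> real) \<Rightarrow> bool" where
  "constructible (_::'c itself) X f \<longleftrightarrow>
     continuous_map X euclideanreal f \<and>
     (\<exists>n a (V :: nat \<Rightarrow> 'c topology) (E :: nat \<Rightarrow> 'c topology) l r h.
        (\<forall>i. Suc i < n \<longrightarrow> a i < a (Suc i)) \<and>
        (\<forall>i<n. compact_space (V i) \<and> locally_path_connected_space (V i)) \<and>
        (\<forall>i. Suc i < n \<longrightarrow> compact_space (E i) \<and> locally_path_connected_space (E i) \<and>
               continuous_map (E i) (V i) (l i) \<and> continuous_map (E i) (V (Suc i)) (r i)) \<and>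
        homeomorphic_map X (glued_top n a V E l r) h \<and>
        (\<forall>x\<in>topspace X. f x = glued_proj (h x)))"

definition smooth_space :: "'p topology \<Rightarrow> real \<Rightarrow> ('p \<times> real) topology" where
  "smooth_space T e = prod_topology T (subtopology euclideanreal {-e..e})"

definition smooth_f :: "('p \<Rightarrow> real) \<Rightarrow> 'p \<times> real \<Rightarrow> real" where
  "smooth_f F = (\<lambda>(x,t). F x + t)"

definition smooth_top :: "'p topology \<Rightarrow> ('p \<Rightarrow> real) \<Rightarrow> real \<Rightarrow> ('p \<times> real) set topology" where
  "smooth_top T F e = reeb_top (smooth_space T e) (smooth_f F)"

definition smooth_fn :: "'p topology \<Rightarrow> ('p \<Rightarrow> real) \<Rightarrow> real \<Rightarrow> ('p \<times> real) set \<Rightarrow> real" where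
  "smooth_fn T F e = reeb_fn (smooth_space T e) (smooth_f F)"

definition smooth_pt :: "'p topology \<Rightarrow> ('p \<Rightarrow> real) \<Rightarrow> real \<Rightarrow> 'p \<Rightarrow> real \<Rightarrow> ('p \<times> real) set" where
  "smooth_pt T F e x t = qcls (smooth_space T e) (reeb_rel (smooth_space T e) (smooth_f F)) (x, t)"

definition up_path :: "'p topology \<Rightarrow> ('p \<Rightarrow> real) \<Rightarrow> (real \<Rightarrow> 'p) \<Rightarrow> bool" where
  "up_path T F g \<longleftrightarrow> pathin T g \<and> (\<forall>s t. 0 \<le> s \<and> s \<le> t \<and> t \<le> 1 \<longrightarrow> F (g s) \<le> F (g t))"

definition down_path :: "'p topology \<Rightarrow> ('p \<Rightarrow> real) \<Rightarrow> (real \<Rightarrow> 'p) \<Rightarrow> bool" where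
  "down_path T F g \<longleftrightarrow> pathin T g \<and> (\<forall>s t. 0 \<le> s \<and> s \<le> t \<and> t \<le> 1 \<longrightarrow> F (g t) \<le> F (g s))"

definition trunc_set :: "'p topology \<Rightarrow> ('p \<Rightarrow> real) \<Rightarrow> real \<Rightarrow> 'p set" where
  "trunc_set T F tau = {p \<in> topspace T.
      (\<exists>g. up_path T F g \<and> g 0 = p \<and> F (g 1) - F p = tau) \<and>
      (\<exists>g. down_path T F g \<and> g 0 = p \<and> F p - F (g 1) = tau)}"

definition tsmooth_top :: "'p topology \<Rightarrow> ('p \<Rightarrow> real) \<Rightarrow> real \<Rightarrow> real \<Rightarrow> ('p \<times> real) set topology" where
  "tsmooth_top T F tau e =
     subtopology (smooth_top T F e) (trunc_set (smooth_top T F e) (smooth_fn T F e) tau)"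

definition to_tsmooth ::
  "'p topology \<Rightarrow> ('p \<Rightarrow> real) \<Rightarrow> 'q topology \<Rightarrow> ('q \<Rightarrow> real) \<Rightarrow> real \<Rightarrow> real
     \<Rightarrow> ('p \<Rightarrow> ('q \<times> real) set) \<Rightarrow> bool" where
  "to_tsmooth T F T' F' m e phi \<longleftrightarrow>
     continuous_map T (tsmooth_top T' F' (m * e) e) phi \<and>
     (\<forall>x\<in>topspace T. smooth_fn T' F' e (phi x) = F x)"

text \<open>The equation S[psi] o phi = eta : (T,F) -> S_(2e)(T,F), written pointwise:
  S[psi] sends [y,t] to [psi y, t], and the canonical identification
  S_e S_e = S_(2e) sends [[z,s],t] to [z,s+t]; eta x = [x,0].\<close>
definition comp_is_eta ::
  "'p topology \<Rightarrow> ('p \<Rightarrow> real) \<Rightarrow> 'q topology \<Rightarrow> ('q \<Rightarrow> real) \<Rightarrow> real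
     \<Rightarrow> ('p \<Rightarrow> ('q \<times> real) set) \<Rightarrow> ('q \<Rightarrow> ('p \<times> real) set) \<Rightarrow> bool" where
  "comp_is_eta T F T' F' e phi psi \<longleftrightarrow>
     (\<forall>x\<in>topspace T. \<forall>y t. y \<in> topspace T' \<and> t \<in> {-e..e} \<and> phi x = smooth_pt T' F' e y t \<longrightarrow>
        (\<forall>z s. z \<in> topspace T \<and> s \<in> {-e..e} \<and> psi y = smooth_pt T F e z s \<longrightarrow>
           smooth_pt T F (2 * e) z (s + t) = smooth_pt T F (2 * e) x 0))"

definition interleaving ::
  "real \<Rightarrow> real \<Rightarrow> 'p topology \<Rightarrow> ('p \<Rightarrow> real) \<Rightarrow> 'q topology \<Rightarrow> ('q \<Rightarrow> real)
     \<Rightarrow> ('p \<Rightarrow> ('q \<times> real) set) \<Rightarrow> ('q \<Rightarrow> ('p \<times> real) set) \<Rightarrow> bool" where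
  "interleaving m e T F T' F' phi psi \<longleftrightarrow>
     to_tsmooth T F T' F' m e phi \<and> to_tsmooth T' F' T F m e psi \<and>
     comp_is_eta T F T' F' e phi psi \<and> comp_is_eta T' F' T F e psi phi"

text \<open>d_I^m, as an extended real (infimum of the empty set is infinity).\<close>
definition trunc_dist ::
  "real \<Rightarrow> 'p topology \<Rightarrow> ('p \<Rightarrow> real) \<Rightarrow> 'q topology \<Rightarrow> ('q \<Rightarrow> real) \<Rightarrow> ereal" where
  "trunc_dist m T F T' F' =
     Inf {ereal e | e. e \<ge> 0 \<and> (\<exists>phi psi. interleaving m e T F T' F' phi psi)}"

end

theory Submission
  imports Defs
begin


lemma openin_quot:
  "openin (quot_top X R) U \<longleftrightarrow> U \<subseteq> qcls X R ` topspace X \<and> openin X {x \<in> topspace X. qcls X R x \<in> U}"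
  unfolding quot_top_def using istopology_quot[of X R] by (simp add: topology_inverse')

lemma topspace_quot: "topspace (quot_top X R) = qcls X R ` topspace X"
proof -
  have "openin (quot_top X R) (qcls X R ` topspace X)"
  proof -
    have "{x \<in> topspace X. qcls X R x \<in> qcls X R ` topspace X} = topspace X" by auto
    then show ?thesis unfolding openin_quot by simp
  qed
  moreover have "topspace (quot_top X R) \<subseteq> qcls X R ` topspace X"
    using openin_quot[of X R "topspace (quot_top X R)"] by simp
  ultimately show ?thesis using openin_subset by blast
qed

lemma quotient_map_quot: "quotient_map X (quot_top X R) (qcls X R)"
  unfolding quotient_map_def topspace_quot openin_quot by auto

lemma continuous_map_quot: "continuous_map X (quot_top X R) (qcls X R)"
  using quotient_map_quot quotient_imp_continuous_map by blast

lemma lpc_quot: "locally_path_connected_space X \<Longrightarrow> locally_path_connected_space (quot_top X R)"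
  using quotient_map_quot locally_path_connected_space_quotient_map_image by blast

lemma reeb_rel_refl: "x \<in> topspace X \<Longrightarrow> reeb_rel X f x x"
  unfolding reeb_rel_def by (simp add: path_component_of_refl)

lemma reeb_rel_sym: "reeb_rel X f x y \<Longrightarrow> reeb_rel X f y x"
proof -
  assume "reeb_rel X f x y"
  then have a: "f x = f y" "path_component_of (subtopology X {z \<in> topspace X. f z = f x}) x y"
    unfolding reeb_rel_def by auto
  have "{z \<in> topspace X. f z = f y} = {z \<in> topspace X. f z = f x}" using a(1) by simp
  then show ?thesis unfolding reeb_rel_def using a path_component_of_sym by fastforce
qed

lemma reeb_rel_trans: "reeb_rel X f x y \<Longrightarrow> reeb_rel X f y z \<Longrightarrow> reeb_rel X f x z"
proof -
  assume "reeb_rel X f x y" "reeb_rel X f y z"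
  then have a: "f x = f y" "path_component_of (subtopology X {w \<in> topspace X. f w = f x}) x y"
     "f y = f z" "path_component_of (subtopology X {w \<in> topspace X. f w = f y}) y z"
    unfolding reeb_rel_def by auto
  have "{w \<in> topspace X. f w = f y} = {w \<in> topspace X. f w = f x}" using a(1) by simp
  then show ?thesis unfolding reeb_rel_def using a path_component_of_trans by fastforce
qed

lemma reeb_rel_topspace: "reeb_rel X f x y \<Longrightarrow> x \<in> topspace X \<and> y \<in> topspace X"
  unfolding reeb_rel_def using path_component_in_topspace by fastforce

lemma mem_qcls: "y \<in> qcls X R x \<longleftrightarrow> y \<in> topspace X \<and> R x y"
  by (simp add: qcls_def)

lemma self_qcls: "x \<in> topspace X \<Longrightarrow> x \<in> qcls X (reeb_rel X f) x"
  by (simp add: mem_qcls reeb_rel_refl)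

lemma qcls_eq_iff:
  assumes "x \<in> topspace X"
  shows "qcls X (reeb_rel X f) x = qcls X (reeb_rel X f) y \<longleftrightarrow> reeb_rel X f x y"
proof
  assume "qcls X (reeb_rel X f) x = qcls X (reeb_rel X f) y"
  then have "x \<in> qcls X (reeb_rel X f) y" using self_qcls[OF assms, of f] by simp
  then have "reeb_rel X f y x" by (simp add: mem_qcls)
  then show "reeb_rel X f x y" by (rule reeb_rel_sym)
next
  assume r: "reeb_rel X f x y"
  show "qcls X (reeb_rel X f) x = qcls X (reeb_rel X f) y"
  proof (rule set_eqI)
    fix z
    have "reeb_rel X f x z \<longleftrightarrow> reeb_rel X f y z"
    proof
      assume "reeb_rel X f x z" then show "reeb_rel X f y z" using reeb_rel_trans[OF reeb_rel_sym[OF r]] by blast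
    next
      assume "reeb_rel X f y z" then show "reeb_rel X f x z" using reeb_rel_trans[OF r] by blast
    qed
    then show "z \<in> qcls X (reeb_rel X f) x \<longleftrightarrow> z \<in> qcls X (reeb_rel X f) y"
      by (simp add: mem_qcls)
  qed
qed

lemma rep_in:
  assumes "C \<in> topspace (reeb_top X f)"
  shows "(SOME p. p \<in> C) \<in> C" "C = qcls X (reeb_rel X f) (SOME p. p \<in> C)"
    "(SOME p. p \<in> C) \<in> topspace X"
    "reeb_fn X f C = f (SOME p. p \<in> C)"
proof -
  have "C \<in> qcls X (reeb_rel X f) ` topspace X"
    using assms unfolding reeb_top_def topspace_quot .
  then obtain x where x: "x \<in> topspace X" "C = qcls X (reeb_rel X f) x"
    by (rule imageE) (rule that)
  then have "x \<in> C" using self_qcls by simp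
  then show 1: "(SOME p. p \<in> C) \<in> C" by (rule someI)
  then have 2: "(SOME p. p \<in> C) \<in> topspace X \<and> reeb_rel X f x (SOME p. p \<in> C)"
    using x(2) by (simp add: mem_qcls)
  then show "C = qcls X (reeb_rel X f) (SOME p. p \<in> C)" using x(2) qcls_eq_iff[OF x(1)] by simp
  show "(SOME p. p \<in> C) \<in> topspace X" using 2 by simp
  show "reeb_fn X f C = f (SOME p. p \<in> C)" unfolding reeb_fn_def ..
qed

lemma reeb_fn_qcls:
  assumes "x \<in> topspace X"
  shows "reeb_fn X f (qcls X (reeb_rel X f) x) = f x"
proof -
  have "x \<in> qcls X (reeb_rel X f) x" using self_qcls[OF assms] .
  then have "(SOME p. p \<in> qcls X (reeb_rel X f) x) \<in> qcls X (reeb_rel X f) x" by (rule someI)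
  then have "reeb_rel X f x (SOME p. p \<in> qcls X (reeb_rel X f) x)" by (simp add: mem_qcls)
  then have "f x = f (SOME p. p \<in> qcls X (reeb_rel X f) x)" unfolding reeb_rel_def by blast
  then show ?thesis unfolding reeb_fn_def by (rule sym)
qed

lemma topspace_reeb: "topspace (reeb_top X f) = qcls X (reeb_rel X f) ` topspace X"
  by (simp add: reeb_top_def topspace_quot)

lemma reeb_rel_map:
  assumes "reeb_rel X f x y"
    and "continuous_map (subtopology X {z \<in> topspace X. f z = f x}) Y h"
    and "\<And>z. z \<in> topspace X \<Longrightarrow> f z = f x \<Longrightarrow> g (h z) = g (h x)"
  shows "reeb_rel Y g (h x) (h y)"
proof -
  let ?L = "{z \<in> topspace X. f z = f x}"
  have pc: "path_component_of (subtopology X ?L) x y" using assms(1) unfolding reeb_rel_def by blast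
  have "continuous_map (subtopology X ?L) (subtopology Y {w \<in> topspace Y. g w = g (h x)}) h"
  proof -
    have "h ` topspace (subtopology X ?L) \<subseteq> topspace Y"
      using assms(2) continuous_map_image_subset_topspace by blast
    then show ?thesis using assms(2,3) by (auto simp: continuous_map_in_subtopology)
  qed
  from path_component_of_continuous_image[OF this pc]
  have "path_component_of (subtopology Y {w \<in> topspace Y. g w = g (h x)}) (h x) (h y)" .
  moreover have "f y = f x" using assms(1) unfolding reeb_rel_def by simp
  moreover have "y \<in> topspace X" using reeb_rel_topspace[OF assms(1)] by simp
  ultimately have e: "g (h y) = g (h x)" and p: "path_component_of (subtopology Y {w \<in> topspace Y. g w = g (h x)}) (h x) (h y)"
    using assms(3) by blast+
  show ?thesis unfolding reeb_rel_def
  proof (rule conjI)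
    show "g (h x) = g (h y)" using e by (rule sym)
    show "path_component_of (subtopology Y {w \<in> topspace Y. g w = g (h x)}) (h x) (h y)" by (fact p)
  qed
qed

lemma reeb_fn_continuous:
  assumes "continuous_map X euclideanreal f"
  shows "continuous_map (reeb_top X f) euclideanreal (reeb_fn X f)"
proof -
  have "continuous_map X euclideanreal (reeb_fn X f \<circ> qcls X (reeb_rel X f))"
    by (rule continuous_map_eq[OF assms]) (simp add: reeb_fn_qcls)
  then show ?thesis unfolding reeb_top_def by (rule continuous_compose_quotient_map[OF quotient_map_quot])
qed



lemma topspace_smooth_space: "topspace (smooth_space T e) = topspace T \<times> {-e..e}"
  by (simp add: smooth_space_def)

lemma smooth_f_simp[simp]: "smooth_f F (a, b) = F a + b"
  by (simp add: smooth_f_def)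

lemma smooth_pt_in:
  assumes "w \<in> topspace T" "\<bar>s\<bar> \<le> e"
  shows "smooth_pt T F e w s \<in> topspace (smooth_top T F e)"
  using assms unfolding smooth_pt_def smooth_top_def topspace_reeb topspace_smooth_space
  by (intro imageI) (auto simp: abs_le_iff)

lemma smooth_fn_pt:
  assumes "w \<in> topspace T" "\<bar>s\<bar> \<le> e"
  shows "smooth_fn T F e (smooth_pt T F e w s) = F w + s"
  unfolding smooth_fn_def smooth_pt_def
  by (subst reeb_fn_qcls) (use assms in \<open>auto simp: topspace_smooth_space\<close>)

lemma smooth_pt_eq:
  assumes "w \<in> topspace T" "\<bar>s\<bar> \<le> e"
  shows "smooth_pt T F e w s = smooth_pt T F e w' s' \<longleftrightarrow>
         reeb_rel (smooth_space T e) (smooth_f F) (w, s) (w', s')"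
  unfolding smooth_pt_def by (rule qcls_eq_iff) (use assms in \<open>auto simp: topspace_smooth_space\<close>)

lemma smooth_rep:
  assumes "C \<in> topspace (smooth_top T F e)"
  shows "fst (SOME p. p \<in> C) \<in> topspace T" "\<bar>snd (SOME p. p \<in> C)\<bar> \<le> e"
    "C = smooth_pt T F e (fst (SOME p. p \<in> C)) (snd (SOME p. p \<in> C))"
    "smooth_fn T F e C = F (fst (SOME p. p \<in> C)) + snd (SOME p. p \<in> C)"
proof -
  note r = rep_in[OF assms[unfolded smooth_top_def]]
  show "fst (SOME p. p \<in> C) \<in> topspace T" "\<bar>snd (SOME p. p \<in> C)\<bar> \<le> e"
    using r(3) by (auto simp: topspace_smooth_space)
  show "C = smooth_pt T F e (fst (SOME p. p \<in> C)) (snd (SOME p. p \<in> C))"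
    using r(2) by (simp add: smooth_pt_def)
  show "smooth_fn T F e C = F (fst (SOME p. p \<in> C)) + snd (SOME p. p \<in> C)"
    using r(4) by (simp add: smooth_fn_def smooth_f_def split_beta)
qed

lemma rel_shift:
  assumes "reeb_rel (smooth_space T e1) (smooth_f F) (w, s) (w', s')"
    and "e1 + \<bar>t\<bar> \<le> e2"
  shows "reeb_rel (smooth_space T e2) (smooth_f F) (w, s + t) (w', s' + t)"
proof -
  let ?h = "\<lambda>x::'a \<times> real. (fst x, snd x + t)"
  have c: "continuous_map (smooth_space T e1) (smooth_space T e2) ?h"
    unfolding smooth_space_def
  proof (rule continuous_map_pairedI)
    show "continuous_map (prod_topology T (top_of_set {- e1..e1})) T (\<lambda>x. fst x)"
      by (simp add: continuous_map_fst)
    have "continuous_map (prod_topology T (top_of_set {- e1..e1})) euclideanreal (\<lambda>x. snd x + t)"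
      by (intro continuous_intros continuous_map_into_fulltopology[OF continuous_map_snd])
    moreover have "snd x + t \<in> {-e2..e2}" if "x \<in> topspace (prod_topology T (top_of_set {- e1..e1}))" for x
      using that assms(2) by auto
    ultimately show "continuous_map (prod_topology T (top_of_set {- e1..e1})) (top_of_set {- e2..e2}) (\<lambda>x. snd x + t)"
      by (auto simp: continuous_map_in_subtopology)
  qed
  have "reeb_rel (smooth_space T e2) (smooth_f F) (?h (w, s)) (?h (w', s'))"
    by (rule reeb_rel_map[OF assms(1) continuous_map_from_subtopology[OF c]]) auto
  then show ?thesis by simp
qed

lemma rel_mono:
  assumes "reeb_rel (smooth_space T e1) (smooth_f F) p q" "e1 \<le> e2"
  shows "reeb_rel (smooth_space T e2) (smooth_f F) p q"
  using rel_shift[of T e1 F "fst p" "snd p" "fst q" "snd q" 0 e2] assms by simp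

lemma pc_to_rel:
  assumes "path_component_of (subtopology T A) a a'"
    and "continuous_map T euclideanreal F"
    and "\<And>z. z \<in> A \<Longrightarrow> z \<in> topspace T \<Longrightarrow> \<bar>c - F z\<bar> \<le> e2"
  shows "reeb_rel (smooth_space T e2) (smooth_f F) (a, c - F a) (a', c - F a')"
proof -
  let ?X = "subtopology T A"
  have eq: "{z \<in> topspace ?X. (0::real) = 0} = topspace ?X" by auto
  have r: "reeb_rel ?X (\<lambda>_. 0::real) a a'"
    unfolding reeb_rel_def eq subtopology_topspace using assms(1) by simp
  let ?h = "\<lambda>z. (z, c - F z)"
  have "continuous_map ?X (smooth_space T e2) ?h"
    unfolding smooth_space_def
  proof (rule continuous_map_pairedI)
    show "continuous_map ?X T (\<lambda>x. x)" by (simp add: continuous_map_from_subtopology)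
    have "continuous_map ?X euclideanreal (\<lambda>x. c - F x)"
      by (intro continuous_intros continuous_map_from_subtopology[OF assms(2)])
    then show "continuous_map ?X (top_of_set {- e2..e2}) (\<lambda>x. c - F x)"
    proof -
      have "c - F x \<in> {-e2..e2}" if "x \<in> topspace ?X" for x
        using assms(3)[of x] that by (auto simp: abs_le_iff)
      then show ?thesis using \<open>continuous_map ?X euclideanreal (\<lambda>x. c - F x)\<close>
        by (auto simp: continuous_map_in_subtopology)
    qed
  qed
  then have "continuous_map (subtopology ?X {z \<in> topspace ?X. (0::real) = 0}) (smooth_space T e2) ?h"
    by (simp add: continuous_map_from_subtopology)
  from reeb_rel_map[OF r this, of "smooth_f F"] show ?thesis by simp
qed

lemma rel_to_pc:
  assumes "reeb_rel (smooth_space T e) (smooth_f F) (a, b) (a', b')"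
    and "\<And>z. z \<in> topspace T \<Longrightarrow> F a + b - e \<le> F z \<Longrightarrow> F z \<le> F a + b + e \<Longrightarrow> z \<in> A"
  shows "path_component_of (subtopology T A) a a'"
proof -
  let ?L = "{z \<in> topspace (smooth_space T e). smooth_f F z = smooth_f F (a, b)}"
  have pc: "path_component_of (subtopology (smooth_space T e) ?L) (a, b) (a', b')"
    using assms(1) unfolding reeb_rel_def by blast
  have "continuous_map (subtopology (smooth_space T e) ?L) (subtopology T A) fst"
  proof -
    have "continuous_map (subtopology (smooth_space T e) ?L) T fst"
      unfolding smooth_space_def by (intro continuous_map_from_subtopology continuous_map_fst)
    moreover have "fst x \<in> A" if "x \<in> topspace (subtopology (smooth_space T e) ?L)" for x
      using that assms(2)[of "fst x"] by (auto simp: topspace_smooth_space)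
    ultimately show ?thesis by (auto simp: continuous_map_in_subtopology)
  qed
  from path_component_of_continuous_image[OF this pc] show ?thesis by simp
qed



lemma pathin_join:
  assumes "pathin X g1" "pathin X g2" "g2 0 = g1 1"
  shows "pathin X (\<lambda>x. if x \<le> 1/2 then g1 (2 * x) else g2 (2 * x - 1))"
  unfolding pathin_def
proof -
  let ?T01 = "top_of_set {0..1::real}"
  have g1: "continuous_map ?T01 X g1" and g2: "continuous_map ?T01 X g2"
    using assms unfolding pathin_def by auto
  let ?g = "\<lambda>x. if x \<le> 1/2 then (g1 \<circ> (\<lambda>t. 2 * t)) x else (g2 \<circ> (\<lambda>t. 2 * t -1)) x"
  have "continuous_map (subtopology euclideanreal {0..1}) X ?g"
  proof (intro continuous_map_cases_le continuous_map_compose, force, force)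
    show "continuous_map (subtopology ?T01 {x \<in> topspace ?T01. x \<le> 1/2}) ?T01 ((*) 2)"
      by (auto simp: continuous_map_in_subtopology continuous_map_from_subtopology)
    have "continuous_map
           (subtopology (top_of_set {0..1}) {x. 0 \<le> x \<and> x \<le> 1 \<and> 1 \<le> x * 2})
           euclideanreal (\<lambda>t. 2 * t - 1)"
      by (intro continuous_intros) (force intro: continuous_map_from_subtopology)
    then show "continuous_map (subtopology ?T01 {x \<in> topspace ?T01. 1/2 \<le> x}) ?T01 (\<lambda>t. 2 * t - 1)"
      by (force simp: continuous_map_in_subtopology)
    show "(g1 \<circ> (*) 2) x = (g2 \<circ> (\<lambda>t. 2 * t - 1)) x" if "x \<in> topspace ?T01" "x = 1/2" for x
    proof -
      have "2 * x = 1" "2 * x - 1 = 0" using that by auto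
      then show ?thesis using assms(3) by simp
    qed
  qed (auto simp: g1 g2)
  moreover have "?g = (\<lambda>x. if x \<le> 1/2 then g1 (2 * x) else g2 (2 * x - 1))"
    by (rule ext) simp
  ultimately show "continuous_map (top_of_set {0..1}) X (\<lambda>x. if x \<le> 1/2 then g1 (2 * x) else g2 (2 * x - 1))"
    by metis
qed

lemma up_join:
  assumes "up_path X F g1" "up_path X F g2" "g2 0 = g1 1"
  shows "up_path X F (\<lambda>x. if x \<le> 1/2 then g1 (2 * x) else g2 (2 * x - 1))"
  unfolding up_path_def
proof (intro conjI allI impI)
  show "pathin X (\<lambda>x. if x \<le> 1/2 then g1 (2 * x) else g2 (2 * x - 1))"
    using assms pathin_join unfolding up_path_def by blast
  fix s t :: real assume st: "0 \<le> s \<and> s \<le> t \<and> t \<le> 1"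
  have m1: "F (g1 a) \<le> F (g1 b)" if "0 \<le> a" "a \<le> b" "b \<le> 1" for a b
    using assms(1) that unfolding up_path_def by blast
  have m2: "F (g2 a) \<le> F (g2 b)" if "0 \<le> a" "a \<le> b" "b \<le> 1" for a b
    using assms(2) that unfolding up_path_def by blast
  show "F (if s \<le> 1/2 then g1 (2 * s) else g2 (2 * s - 1)) \<le> F (if t \<le> 1/2 then g1 (2 * t) else g2 (2 * t - 1))"
  proof (cases "t \<le> 1/2")
    case True then show ?thesis using st m1[of "2 * s" "2 * t"] by auto
  next
    case False
    note tF = False
    show ?thesis
    proof (cases "s \<le> 1/2")
      case True
      then have "F (g1 (2 * s)) \<le> F (g1 1)" using st m1[of "2 * s" 1] by auto
      also have "\<dots> = F (g2 0)" using assms(3) by simp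
      also have "\<dots> \<le> F (g2 (2 * t - 1))" using st tF m2[of 0 "2 * t - 1"] by auto
      finally show ?thesis using True tF by simp
    next
      case False
      then show ?thesis using st tF m2[of "2 * s - 1" "2 * t - 1"] by auto
    qed
  qed
qed

lemma down_join:
  assumes "down_path X F g1" "down_path X F g2" "g2 0 = g1 1"
  shows "down_path X F (\<lambda>x. if x \<le> 1/2 then g1 (2 * x) else g2 (2 * x - 1))"
proof -
  have "up_path X (\<lambda>x. - F x) g1" "up_path X (\<lambda>x. - F x) g2"
    using assms unfolding up_path_def down_path_def by auto
  from up_join[OF this assms(3)] show ?thesis unfolding up_path_def down_path_def by auto
qed

definition etamap :: "'p topology \<Rightarrow> ('p \<Rightarrow> real) \<Rightarrow> real \<Rightarrow> ('p \<times> real) set \<Rightarrow> ('p \<times> real) set" where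
  "etamap T F e2 C = smooth_pt T F e2 (fst (SOME p. p \<in> C)) (snd (SOME p. p \<in> C))"

lemma etamap_pt:
  assumes "w \<in> topspace T" "\<bar>s\<bar> \<le> e1" "e1 \<le> e2"
  shows "etamap T F e2 (smooth_pt T F e1 w s) = smooth_pt T F e2 w s"
proof -
  let ?C = "smooth_pt T F e1 w s"
  have C: "?C \<in> topspace (smooth_top T F e1)" by (rule smooth_pt_in[OF assms(1,2)])
  note r = smooth_rep[OF C]
  have "reeb_rel (smooth_space T e1) (smooth_f F) (w, s) (fst (SOME p. p \<in> ?C), snd (SOME p. p \<in> ?C))"
    using smooth_pt_eq[OF assms(1,2), of F] r(3) by metis
  then have "reeb_rel (smooth_space T e2) (smooth_f F) (w, s) (fst (SOME p. p \<in> ?C), snd (SOME p. p \<in> ?C))"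
    using rel_mono assms(3) by blast
  then have "smooth_pt T F e2 w s = etamap T F e2 ?C"
    unfolding etamap_def using smooth_pt_eq[of w T s e2 F] assms by auto
  then show ?thesis by simp
qed

lemma etamap_in:
  assumes "C \<in> topspace (smooth_top T F e1)" "e1 \<le> e2"
  shows "etamap T F e2 C \<in> topspace (smooth_top T F e2)"
  using smooth_rep[OF assms(1)] assms(2) unfolding etamap_def
  by (intro smooth_pt_in) auto

lemma etamap_fn:
  assumes "C \<in> topspace (smooth_top T F e1)" "e1 \<le> e2"
  shows "smooth_fn T F e2 (etamap T F e2 C) = smooth_fn T F e1 C"
  using smooth_rep[OF assms(1)] assms(2) unfolding etamap_def
  by (subst smooth_fn_pt) auto

lemma shift_cont:
  assumes "e1 + \<bar>t\<bar> \<le> e2"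
  shows "continuous_map (smooth_space T e1) (smooth_space T e2) (\<lambda>x. (fst x, snd x + t))"
  unfolding smooth_space_def
proof (rule continuous_map_pairedI)
  show "continuous_map (prod_topology T (top_of_set {- e1..e1})) T (\<lambda>x. fst x)"
    by (simp add: continuous_map_fst)
  have "continuous_map (prod_topology T (top_of_set {- e1..e1})) euclideanreal (\<lambda>x. snd x + t)"
    by (intro continuous_intros continuous_map_into_fulltopology[OF continuous_map_snd])
  moreover have "snd x + t \<in> {-e2..e2}" if "x \<in> topspace (prod_topology T (top_of_set {- e1..e1}))" for x
    using that assms by auto
  ultimately show "continuous_map (prod_topology T (top_of_set {- e1..e1})) (top_of_set {- e2..e2}) (\<lambda>x. snd x + t)"
    by (auto simp: continuous_map_in_subtopology)
qed

lemma etamap_cont: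
  assumes "e1 \<le> e2"
  shows "continuous_map (smooth_top T F e1) (smooth_top T F e2) (etamap T F e2)"
proof -
  let ?q1 = "qcls (smooth_space T e1) (reeb_rel (smooth_space T e1) (smooth_f F))"
  let ?q2 = "qcls (smooth_space T e2) (reeb_rel (smooth_space T e2) (smooth_f F))"
  have incl: "continuous_map (smooth_space T e1) (smooth_space T e2) (\<lambda>x. x)"
    using shift_cont[of e1 0 e2 T] assms by simp
  have "continuous_map (smooth_space T e1) (smooth_top T F e2) ?q2"
    using continuous_map_compose[OF incl continuous_map_quot] unfolding smooth_top_def reeb_top_def o_def .
  then have "continuous_map (smooth_space T e1) (smooth_top T F e2) (etamap T F e2 \<circ> ?q1)"
  proof (rule continuous_map_eq)
    fix x assume x: "x \<in> topspace (smooth_space T e1)"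
    then have "\<bar>snd x\<bar> \<le> e1" "fst x \<in> topspace T" by (auto simp: topspace_smooth_space)
    from etamap_pt[OF this(2,1) assms, of F]
    show "?q2 x = (etamap T F e2 \<circ> ?q1) x" by (simp add: smooth_pt_def)
  qed
  then show ?thesis
    unfolding smooth_top_def reeb_top_def by (rule continuous_compose_quotient_map[OF quotient_map_quot])
qed



lemma pathin_pt:
  assumes "w \<in> topspace T" "continuous_on {0..1} h" "\<And>v. v \<in> {0..1} \<Longrightarrow> \<bar>h v\<bar> \<le> e"
  shows "pathin (smooth_top T F e) (\<lambda>v. smooth_pt T F e w (h v))"
proof -
  have "continuous_map (top_of_set {0..1}) (smooth_space T e) (\<lambda>v. (w, h v))"
    unfolding smooth_space_def
  proof (rule continuous_map_pairedI)
    show "continuous_map (top_of_set {0..1}) T (\<lambda>x. w)" using assms(1) by simp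
    have "h v \<in> {-e..e}" if "v \<in> {0..1}" for v
      using abs_le_D1[OF assms(3)[OF that]] abs_le_D2[OF assms(3)[OF that]] by simp
    then show "continuous_map (top_of_set {0..1}) (top_of_set {- e..e}) h"
      using assms(2) by auto
  qed
  from continuous_map_compose[OF this continuous_map_quot]
  show ?thesis unfolding pathin_def smooth_top_def reeb_top_def smooth_pt_def o_def .
qed

lemma pathin_in: "pathin X g \<Longrightarrow> u \<in> {0..1} \<Longrightarrow> g u \<in> topspace X"
  unfolding pathin_def continuous_map_def by (auto simp: Pi_iff)

lemma trunc_eta:
  assumes "C \<in> trunc_set (smooth_top T F e1) (smooth_fn T F e1) tau" "e1 \<le> e2"
  shows "etamap T F e2 C \<in> trunc_set (smooth_top T F e2) (smooth_fn T F e2) (tau + (e2 - e1))"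
proof -
  let ?S1 = "smooth_top T F e1" and ?S2 = "smooth_top T F e2"
  let ?F1 = "smooth_fn T F e1" and ?F2 = "smooth_fn T F e2"
  let ?d = "e2 - e1"
  have C: "C \<in> topspace ?S1" using assms(1) unfolding trunc_set_def by blast
  obtain gu where gu: "up_path ?S1 ?F1 gu" "gu 0 = C" "?F1 (gu 1) - ?F1 C = tau"
    using assms(1) unfolding trunc_set_def by blast
  obtain gd where gd: "down_path ?S1 ?F1 gd" "gd 0 = C" "?F1 C - ?F1 (gd 1) = tau"
    using assms(1) unfolding trunc_set_def by blast
  have ec: "continuous_map ?S1 ?S2 (etamap T F e2)" using etamap_cont[OF assms(2)] .
  have comp_up: "up_path ?S2 ?F2 (etamap T F e2 \<circ> g)" if g: "up_path ?S1 ?F1 g" for g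
  proof -
    have p: "pathin ?S1 g" using g unfolding up_path_def by blast
    have gin: "g u \<in> topspace ?S1" if "u \<in> {0..1}" for u
      using p that by (rule pathin_in)
    have "?F2 ((etamap T F e2 \<circ> g) u) = ?F1 (g u)" if "u \<in> {0..1}" for u
      using etamap_fn[OF gin[OF that] assms(2)] by simp
    then show ?thesis using g pathin_compose[OF p ec] unfolding up_path_def by auto
  qed
  have comp_down: "down_path ?S2 ?F2 (etamap T F e2 \<circ> g)" if g: "down_path ?S1 ?F1 g" for g
  proof -
    have p: "pathin ?S1 g" using g unfolding down_path_def by blast
    have gin: "g u \<in> topspace ?S1" if "u \<in> {0..1}" for u
      using p that by (rule pathin_in)
    have "?F2 ((etamap T F e2 \<circ> g) u) = ?F1 (g u)" if "u \<in> {0..1}" for u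
      using etamap_fn[OF gin[OF that] assms(2)] by simp
    then show ?thesis using g pathin_compose[OF p ec] unfolding down_path_def by auto
  qed
  have ext: "up_path ?S2 ?F2 (\<lambda>v. smooth_pt T F e2 (fst (SOME p. p \<in> D)) (snd (SOME p. p \<in> D) + v * ?d))
     \<and> ?F2 (smooth_pt T F e2 (fst (SOME p. p \<in> D)) (snd (SOME p. p \<in> D) + 1 * ?d)) = ?F1 D + ?d
     \<and> down_path ?S2 ?F2 (\<lambda>v. smooth_pt T F e2 (fst (SOME p. p \<in> D)) (snd (SOME p. p \<in> D) + v * (- ?d)))
     \<and> ?F2 (smooth_pt T F e2 (fst (SOME p. p \<in> D)) (snd (SOME p. p \<in> D) + 1 * (- ?d))) = ?F1 D - ?d"
    if D: "D \<in> topspace ?S1" for D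
  proof -
    note r = smooth_rep[OF D]
    let ?a = "fst (SOME p. p \<in> D)" and ?b = "snd (SOME p. p \<in> D)"
    have bnd: "\<bar>?b + v * k\<bar> \<le> e2" if "v \<in> {0..1}" "\<bar>k\<bar> = ?d" for v k
    proof -
      have "\<bar>v * k\<bar> \<le> ?d" using that by (auto simp: abs_mult intro: mult_left_le_one_le)
      then show ?thesis using r(2) by linarith
    qed
    have val: "?F2 (smooth_pt T F e2 ?a (?b + v * k)) = ?F1 D + v * k" if "v \<in> {0..1}" "\<bar>k\<bar> = ?d" for v k
      using smooth_fn_pt[OF r(1) bnd[OF that]] r(4) by simp
    have pth: "pathin ?S2 (\<lambda>v. smooth_pt T F e2 ?a (?b + v * k))" if "\<bar>k\<bar> = ?d" for k
      by (rule pathin_pt[OF r(1)]) (auto intro!: continuous_intros bnd that)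
    have d0: "?d \<ge> 0" using assms(2) by simp
    have "up_path ?S2 ?F2 (\<lambda>v. smooth_pt T F e2 ?a (?b + v * ?d))"
      unfolding up_path_def using pth[of ?d] val[of _ ?d] d0 by (auto intro: mult_right_mono)
    moreover have "down_path ?S2 ?F2 (\<lambda>v. smooth_pt T F e2 ?a (?b + v * (- ?d)))"
      unfolding down_path_def using pth[of "- ?d"] val[of _ "- ?d"] d0 by (auto intro: mult_right_mono_neg)
    ultimately show ?thesis using val[of 1 ?d] val[of 1 "- ?d"] d0 by auto
  qed
  have D1: "gu 1 \<in> topspace ?S1" "gd 1 \<in> topspace ?S1"
    using gu(1) gd(1) unfolding up_path_def down_path_def by (auto intro: pathin_in)
  have start: "smooth_pt T F e2 (fst (SOME p. p \<in> D)) (snd (SOME p. p \<in> D) + 0 * k) = (etamap T F e2 \<circ> g) 1"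
    if "g 1 = D" for g D and k :: real
    using that by (simp add: etamap_def)
  let ?U = "\<lambda>x. if x \<le> 1/2 then (etamap T F e2 \<circ> gu) (2 * x)
        else smooth_pt T F e2 (fst (SOME p. p \<in> gu 1)) (snd (SOME p. p \<in> gu 1) + (2 * x - 1) * ?d)"
  let ?V = "\<lambda>x. if x \<le> 1/2 then (etamap T F e2 \<circ> gd) (2 * x)
        else smooth_pt T F e2 (fst (SOME p. p \<in> gd 1)) (snd (SOME p. p \<in> gd 1) + (2 * x - 1) * (- ?d))"
  have U: "up_path ?S2 ?F2 ?U"
    by (rule up_join[OF comp_up[OF gu(1)] conjunct1[OF ext[OF D1(1)]]]) (rule start, rule refl)
  have V: "down_path ?S2 ?F2 ?V"
    by (rule down_join[OF comp_down[OF gd(1)] conjunct1[OF conjunct2[OF conjunct2[OF ext[OF D1(2)]]]]]) (rule start, rule refl)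
  have eC: "etamap T F e2 C \<in> topspace ?S2" using etamap_in[OF C assms(2)] .
  have fC: "?F2 (etamap T F e2 C) = ?F1 C" using etamap_fn[OF C assms(2)] .
  have "?U 0 = etamap T F e2 C" "?V 0 = etamap T F e2 C" using gu(2) gd(2) by auto
  moreover have "?F2 (?U 1) - ?F2 (etamap T F e2 C) = tau + ?d"
    using ext[OF D1(1)] fC gu(3) by simp
  moreover have "?F2 (etamap T F e2 C) - ?F2 (?V 1) = tau + ?d"
    using ext[OF D1(2)] fC gd(3) by simp
  ultimately show ?thesis unfolding trunc_set_def using eC U V by blast
qed



lemma to_tsmooth_eta:
  assumes "to_tsmooth T F T' F' m e phi" "e \<le> e2" "m2 * e2 = m * e + (e2 - e)"
  shows "to_tsmooth T F T' F' m2 e2 (etamap T' F' e2 \<circ> phi)"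
proof -
  have c: "continuous_map T (smooth_top T' F' e) phi"
    and img: "\<And>x. x \<in> topspace T \<Longrightarrow> phi x \<in> trunc_set (smooth_top T' F' e) (smooth_fn T' F' e) (m * e)"
    and fp: "\<And>x. x \<in> topspace T \<Longrightarrow> smooth_fn T' F' e (phi x) = F x"
    using assms(1) unfolding to_tsmooth_def tsmooth_top_def continuous_map_in_subtopology
    by (auto dest: continuous_map_image_subset_topspace)
  have pin: "phi x \<in> topspace (smooth_top T' F' e)" if "x \<in> topspace T" for x
    using img[OF that] unfolding trunc_set_def by blast
  have c2: "continuous_map T (smooth_top T' F' e2) (etamap T' F' e2 \<circ> phi)"
    using continuous_map_compose[OF c etamap_cont[OF assms(2)]] .
  have "(etamap T' F' e2 \<circ> phi) x \<in> trunc_set (smooth_top T' F' e2) (smooth_fn T' F' e2) (m2 * e2)"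
    if "x \<in> topspace T" for x
    using trunc_eta[OF img[OF that] assms(2)] assms(3) by simp
  then have "continuous_map T (tsmooth_top T' F' (m2 * e2) e2) (etamap T' F' e2 \<circ> phi)"
    unfolding tsmooth_top_def continuous_map_in_subtopology using c2 by auto
  moreover have "smooth_fn T' F' e2 ((etamap T' F' e2 \<circ> phi) x) = F x" if "x \<in> topspace T" for x
    using etamap_fn[OF pin[OF that] assms(2)] fp[OF that] by simp
  ultimately show ?thesis unfolding to_tsmooth_def by blast
qed

lemma smooth_f_cont:
  assumes "continuous_map T euclideanreal F"
  shows "continuous_map (smooth_space T e) euclideanreal (smooth_f F)"
proof -
  have "continuous_map (smooth_space T e) euclideanreal (\<lambda>x. F (fst x) + snd x)"
    unfolding smooth_space_def
    by (intro continuous_map_add continuous_map_compose[OF continuous_map_fst assms, unfolded o_def]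
          continuous_map_into_fulltopology[OF continuous_map_snd])
  moreover have "smooth_f F = (\<lambda>x. F (fst x) + snd x)"
    by (rule ext) (simp add: smooth_f_def split_beta)
  ultimately show ?thesis by simp
qed

lemma rep_rel:
  assumes "w \<in> topspace T" "\<bar>s\<bar> \<le> e"
  shows "reeb_rel (smooth_space T e) (smooth_f F) (w, s)
           (fst (SOME p. p \<in> smooth_pt T F e w s), snd (SOME p. p \<in> smooth_pt T F e w s))"
proof -
  note r = smooth_rep[OF smooth_pt_in[OF assms, of F]]
  show ?thesis using r(3) smooth_pt_eq[OF assms, of F] by metis
qed



lemma rep_pc:
  assumes "w \<in> topspace T" "\<bar>s\<bar> \<le> e"
    and "\<bar>F w + s - c\<bar> + e < 2 * e2"
  shows "path_component_of (subtopology T {z \<in> topspace T. c - 2*e2 < F z \<and> F z < c + 2*e2})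
           w (fst (SOME p. p \<in> smooth_pt T F e w s))"
proof -
  have "reeb_rel (smooth_space T e) (smooth_f F) (w, s)
           (fst (SOME p. p \<in> smooth_pt T F e w s), snd (SOME p. p \<in> smooth_pt T F e w s))"
    by (rule rep_rel[OF assms(1,2)])
  then show ?thesis
    by (rule rel_to_pc) (use assms(3) in \<open>auto simp: abs_le_iff abs_less_iff\<close>)
qed

lemma K:
  fixes T :: "'p topology"
  assumes lpc: "locally_path_connected_space T"
    and Fc: "continuous_map T euclideanreal F"
    and ee: "0 \<le> e" "e < e2"
    and Cp: "pathin (smooth_top T F e) Cp"
    and bd: "\<And>u. u \<in> {0..1} \<Longrightarrow> \<bar>c - smooth_fn T F e (Cp u)\<bar> \<le> e2"
  shows "path_component_of (subtopology T {z \<in> topspace T. c - 2*e2 < F z \<and> F z < c + 2*e2})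
           (fst (SOME p. p \<in> Cp 0)) (fst (SOME p. p \<in> Cp 1))"
proof -
  define A where "A = {z \<in> topspace T. c - 2*e2 < F z \<and> F z < c + 2*e2}"
  define r where "r u = (SOME p. p \<in> Cp u)" for u
  let ?R = "\<lambda>u v. path_component_of (subtopology T A) (fst (r u)) (fst (r v))"
  have Aopen: "openin T A"
  proof -
    have "openin T {x \<in> topspace T. F x \<in> {c - 2*e2 <..< c + 2*e2}}"
      by (rule openin_continuous_map_preimage[OF Fc]) simp
    then show ?thesis unfolding A_def by simp
  qed
  have lpcA: "locally_path_connected_space (subtopology T A)"
    by (rule locally_path_connected_space_open_subset[OF lpc Aopen])
  have Cin: "Cp u \<in> topspace (smooth_top T F e)" if "u \<in> {0..1}" for u
    using Cp that by (rule pathin_in)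
  have "?R 0 1"
  proof (rule connected_equivalence_relation[of "{0..1}" 0 1 ?R])
    show "connected {0..1::real}" by simp
    show "0 \<in> {0..1::real}" "1 \<in> {0..1::real}" by auto
    show "?R y x" if "?R x y" for x y using that by (rule path_component_of_sym)
    show "?R x z" if "?R x y" "?R y z" for x y z using that by (rule path_component_of_trans)
  next
    fix u0 :: real assume u0: "u0 \<in> {0..1}"
    define a0 where "a0 = fst (r u0)"
    define W where "W = Collect (path_component_of (subtopology T A) a0)"
    have Wopen: "openin T W"
      unfolding W_def
      by (rule openin_trans_full[OF openin_path_component_of_locally_path_connected_space[OF lpcA] Aopen])
    define Ob where "Ob = {D \<in> topspace (smooth_top T F e). fst (SOME p. p \<in> D) \<in> W \<and>
                           \<bar>smooth_fn T F e D - c\<bar> < 2 * e2 - e}"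
    have pre: "{x \<in> topspace (smooth_space T e). qcls (smooth_space T e) (reeb_rel (smooth_space T e) (smooth_f F)) x \<in> Ob}
          = {x \<in> topspace (smooth_space T e). fst x \<in> W} \<inter>
            {x \<in> topspace (smooth_space T e). smooth_f F x \<in> {c - (2 * e2 - e) <..< c + (2 * e2 - e)}}"
    proof (rule set_eqI)
      fix x :: "'p \<times> real"
      show "x \<in> {x \<in> topspace (smooth_space T e). qcls (smooth_space T e) (reeb_rel (smooth_space T e) (smooth_f F)) x \<in> Ob}
          \<longleftrightarrow> x \<in> {x \<in> topspace (smooth_space T e). fst x \<in> W} \<inter>
            {x \<in> topspace (smooth_space T e). smooth_f F x \<in> {c - (2 * e2 - e) <..< c + (2 * e2 - e)}}"
      proof (cases "x \<in> topspace (smooth_space T e)")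
        case False then show ?thesis by simp
      next
        case True
        obtain w s where x: "x = (w, s)" by (cases x)
        have ws: "w \<in> topspace T" "\<bar>s\<bar> \<le> e" using True x by (auto simp: topspace_smooth_space)
        have q: "qcls (smooth_space T e) (reeb_rel (smooth_space T e) (smooth_f F)) x = smooth_pt T F e w s"
          by (simp add: x smooth_pt_def)
        have inS: "smooth_pt T F e w s \<in> topspace (smooth_top T F e)" by (rule smooth_pt_in[OF ws])
        have fv: "smooth_fn T F e (smooth_pt T F e w s) = F w + s" by (rule smooth_fn_pt[OF ws])
        show ?thesis
        proof (cases "\<bar>F w + s - c\<bar> < 2 * e2 - e")
          case False
          have l: "qcls (smooth_space T e) (reeb_rel (smooth_space T e) (smooth_f F)) x \<notin> Ob"
            using False fv unfolding q Ob_def by simp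
          have r: "smooth_f F x \<notin> {c - (2 * e2 - e) <..< c + (2 * e2 - e)}"
            using False unfolding x by (simp add: abs_less_iff) linarith
          show ?thesis using l r by blast
        next
          case b: True
          have pc: "path_component_of (subtopology T A) w (fst (SOME p. p \<in> smooth_pt T F e w s))"
            unfolding A_def by (rule rep_pc[OF ws]) (use b in simp)
          have "fst (SOME p. p \<in> smooth_pt T F e w s) \<in> W \<longleftrightarrow> w \<in> W"
          proof
            assume "fst (SOME p. p \<in> smooth_pt T F e w s) \<in> W"
            then show "w \<in> W" unfolding W_def using path_component_of_trans[OF _ path_component_of_sym[OF pc]] by simp
          next
            assume "w \<in> W"
            then show "fst (SOME p. p \<in> smooth_pt T F e w s) \<in> W" unfolding W_def using path_component_of_trans[OF _ pc] by simp
          qed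
          then have l: "qcls (smooth_space T e) (reeb_rel (smooth_space T e) (smooth_f F)) x \<in> Ob \<longleftrightarrow> w \<in> W"
            using b inS fv unfolding q Ob_def by simp
          have r: "smooth_f F x \<in> {c - (2 * e2 - e) <..< c + (2 * e2 - e)}"
            using b unfolding x by (simp add: abs_less_iff)
          show ?thesis using l r True unfolding x by simp
        qed
      qed
    qed
    have Oopen: "openin (smooth_top T F e) Ob"
      unfolding smooth_top_def reeb_top_def openin_quot
    proof
      show "Ob \<subseteq> qcls (smooth_space T e) (reeb_rel (smooth_space T e) (smooth_f F)) ` topspace (smooth_space T e)"
        unfolding Ob_def smooth_top_def reeb_top_def topspace_quot by blast
      have o1: "openin (smooth_space T e) {x \<in> topspace (smooth_space T e). fst x \<in> W}"
        by (rule openin_continuous_map_preimage[OF _ Wopen]) (simp add: smooth_space_def continuous_map_fst)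
      have o2: "openin (smooth_space T e) {x \<in> topspace (smooth_space T e). smooth_f F x \<in> {c - (2 * e2 - e) <..< c + (2 * e2 - e)}}"
        by (rule openin_continuous_map_preimage[OF smooth_f_cont[OF Fc]]) simp
      show "openin (smooth_space T e) {x \<in> topspace (smooth_space T e). qcls (smooth_space T e) (reeb_rel (smooth_space T e) (smooth_f F)) x \<in> Ob}"
        unfolding pre by (rule openin_Int[OF o1 o2])
    qed
    define T0 where "T0 = {u \<in> topspace (top_of_set {0..1::real}). Cp u \<in> Ob}"
    have T0open: "openin (top_of_set {0..1}) T0"
      unfolding T0_def by (rule openin_continuous_map_preimage[OF Cp[unfolded pathin_def] Oopen])
    have "u0 \<in> T0"
    proof -
      note rr = smooth_rep[OF Cin[OF u0]]
      have a0T: "a0 \<in> topspace T" using rr(1) unfolding a0_def r_def .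
      have "\<bar>c - smooth_fn T F e (Cp u0)\<bar> \<le> e2" using bd[OF u0] .
      then have "\<bar>c - F a0\<bar> < 2 * e2" using rr(2,4) ee unfolding a0_def r_def by (simp add: abs_le_iff abs_less_iff)
      then have "a0 \<in> A" using a0T unfolding A_def by (simp add: abs_less_iff)
      then have "a0 \<in> W" unfolding W_def using a0T by (simp add: path_component_of_refl)
      moreover have "\<bar>smooth_fn T F e (Cp u0) - c\<bar> < 2 * e2 - e" using bd[OF u0] ee by (simp add: abs_le_iff abs_less_iff)
      ultimately show ?thesis unfolding T0_def Ob_def using u0 Cin[OF u0] unfolding a0_def r_def by simp
    qed
    moreover have "\<forall>x\<in>T0. ?R u0 x"
      unfolding T0_def Ob_def W_def a0_def r_def by simp
    ultimately show "\<exists>T. openin (top_of_set {0..1}) T \<and> u0 \<in> T \<and> (\<forall>x\<in>T. ?R u0 x)"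
      using T0open by blast
  qed
  then show ?thesis unfolding A_def r_def .
qed



lemma to_tsmooth_D:
  assumes "to_tsmooth T F T' F' m e phi"
  shows "continuous_map T (smooth_top T' F' e) phi"
    "\<And>x. x \<in> topspace T \<Longrightarrow> phi x \<in> topspace (smooth_top T' F' e)"
    "\<And>x. x \<in> topspace T \<Longrightarrow> smooth_fn T' F' e (phi x) = F x"
proof -
  have c: "continuous_map T (tsmooth_top T' F' (m * e) e) phi" and fp: "\<And>x. x \<in> topspace T \<Longrightarrow> smooth_fn T' F' e (phi x) = F x"
    using assms unfolding to_tsmooth_def by auto
  show c2: "continuous_map T (smooth_top T' F' e) phi"
    using c unfolding tsmooth_top_def by (rule continuous_map_into_fulltopology)
  show "phi x \<in> topspace (smooth_top T' F' e)" if "x \<in> topspace T" for x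
    using c2 that by (auto dest: continuous_map_image_subset_topspace)
  show "smooth_fn T' F' e (phi x) = F x" if "x \<in> topspace T" for x using fp that .
qed

lemma rel_level:
  assumes "reeb_rel X f p q" shows "f p = f q"
  using assms unfolding reeb_rel_def by blast

lemma comp_eta:
  fixes T :: "'p topology" and T' :: "'q topology"
  assumes lpc: "locally_path_connected_space T"
    and Fc: "continuous_map T euclideanreal F"
    and ee: "0 \<le> e" "e < e2"
    and phi: "to_tsmooth T F T' F' m e phi"
    and psi: "to_tsmooth T' F' T F m e psi"
    and ce: "comp_is_eta T F T' F' e phi psi"
  shows "comp_is_eta T F T' F' e2 (etamap T' F' e2 \<circ> phi) (etamap T F e2 \<circ> psi)"
  unfolding comp_is_eta_def
proof (intro ballI allI impI)
  fix x y' t' z' s'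
  assume x: "x \<in> topspace T"
    and H1: "y' \<in> topspace T' \<and> t' \<in> {- e2..e2} \<and> (etamap T' F' e2 \<circ> phi) x = smooth_pt T' F' e2 y' t'"
    and H2: "z' \<in> topspace T \<and> s' \<in> {- e2..e2} \<and> (etamap T F e2 \<circ> psi) y' = smooth_pt T F e2 z' s'"
  have y': "y' \<in> topspace T'" "\<bar>t'\<bar> \<le> e2" using H1 by auto
  have z': "z' \<in> topspace T" "\<bar>s'\<bar> \<le> e2" using H2 by auto
  note phiD = to_tsmooth_D[OF phi] and psiD = to_tsmooth_D[OF psi]
  define y0 where "y0 = fst (SOME p. p \<in> phi x)"
  define t0 where "t0 = snd (SOME p. p \<in> phi x)"
  note r0 = smooth_rep[OF phiD(2)[OF x], folded y0_def t0_def]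
  have lev0: "F' y0 + t0 = F x" using r0(4) phiD(3)[OF x] by simp
  define z0 where "z0 = fst (SOME p. p \<in> psi y0)"
  define s0 where "s0 = snd (SOME p. p \<in> psi y0)"
  note r1 = smooth_rep[OF psiD(2)[OF r0(1)], folded z0_def s0_def]
  have lev1: "F z0 + s0 = F' y0" using r1(4) psiD(3)[OF r0(1)] by simp
  define z1 where "z1 = fst (SOME p. p \<in> psi y')"
  define s1 where "s1 = snd (SOME p. p \<in> psi y')"
  note r2 = smooth_rep[OF psiD(2)[OF y'(1)], folded z1_def s1_def]
  have lev2: "F z1 + s1 = F' y'" using r2(4) psiD(3)[OF y'(1)] by simp
  have "smooth_pt T F (2 * e) z0 (s0 + t0) = smooth_pt T F (2 * e) x 0"
  proof -
    have c1: "y0 \<in> topspace T' \<and> t0 \<in> {-e..e} \<and> phi x = smooth_pt T' F' e y0 t0"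
      using r0(1,3) abs_le_D1[OF r0(2)] abs_le_D2[OF r0(2)] by simp
    have c2: "z0 \<in> topspace T \<and> s0 \<in> {-e..e} \<and> psi y0 = smooth_pt T F e z0 s0"
      using r1(1,3) abs_le_D1[OF r1(2)] abs_le_D2[OF r1(2)] by simp
    show ?thesis using ce x c1 c2 unfolding comp_is_eta_def by blast
  qed
  then have "reeb_rel (smooth_space T (2 * e)) (smooth_f F) (x, 0) (z0, s0 + t0)"
    using smooth_pt_eq[OF x, of 0 "2 * e" F z0 "s0 + t0"] ee by simp
  then have R1: "reeb_rel (smooth_space T (2 * e2)) (smooth_f F) (x, 0) (z0, s0 + t0)"
    by (rule rel_mono) (use ee in simp)
  have "smooth_pt T' F' e2 y0 t0 = smooth_pt T' F' e2 y' t'"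
    using H1 unfolding etamap_def y0_def t0_def by simp
  then have Rg: "reeb_rel (smooth_space T' e2) (smooth_f F') (y0, t0) (y', t')"
    using smooth_pt_eq[OF r0(1), of t0 e2 F' y' t'] r0(2) ee by simp
  have levy: "F' y0 + t0 = F' y' + t'" using rel_level[OF Rg] by simp
  let ?L = "{z \<in> topspace (smooth_space T' e2). smooth_f F' z = smooth_f F' (y0, t0)}"
  obtain g where g: "pathin (subtopology (smooth_space T' e2) ?L) g" "g 0 = (y0, t0)" "g 1 = (y', t')"
    using Rg unfolding reeb_rel_def path_component_of_def by blast
  have gp: "pathin (smooth_space T' e2) g" using g(1) by (simp add: pathin_subtopology)
  have gL: "g u \<in> ?L" if "u \<in> {0..1}" for u
    using pathin_in[OF g(1) that] by simp
  define Cp where "Cp u = psi (fst (g u))" for u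
  have Cpp: "pathin (smooth_top T F e) Cp"
  proof -
    have "pathin T' (fst \<circ> g)"
      by (rule pathin_compose[OF gp]) (simp add: smooth_space_def continuous_map_fst)
    then have "pathin (smooth_top T F e) (psi \<circ> (fst \<circ> g))"
      by (rule pathin_compose[OF _ psiD(1)])
    then show ?thesis unfolding Cp_def o_def .
  qed
  have bd: "\<bar>F x - smooth_fn T F e (Cp u)\<bar> \<le> e2" if u: "u \<in> {0..1}" for u
  proof -
    have "g u \<in> ?L" by (rule gL[OF u])
    then have a: "fst (g u) \<in> topspace T'" "\<bar>snd (g u)\<bar> \<le> e2" "F' (fst (g u)) + snd (g u) = F' y0 + t0"
      by (auto simp: topspace_smooth_space smooth_f_def split_beta)
    have "smooth_fn T F e (Cp u) = F' (fst (g u))" unfolding Cp_def by (rule psiD(3)[OF a(1)])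
    then show ?thesis using a lev0 by simp
  qed
  have pcA: "path_component_of (subtopology T {z \<in> topspace T. F x - 2*e2 < F z \<and> F z < F x + 2*e2})
           (fst (SOME p. p \<in> Cp 0)) (fst (SOME p. p \<in> Cp 1))"
    by (rule K[OF lpc Fc ee Cpp bd])
  then have "path_component_of (subtopology T {z \<in> topspace T. F x - 2*e2 < F z \<and> F z < F x + 2*e2}) z0 z1"
    unfolding Cp_def g(2,3) z0_def z1_def by simp
  then have "reeb_rel (smooth_space T (2 * e2)) (smooth_f F) (z0, F x - F z0) (z1, F x - F z1)"
    by (rule pc_to_rel[OF _ Fc]) (auto simp: abs_le_iff)
  moreover have "F x - F z0 = s0 + t0" using lev0 lev1 by simp
  moreover have "F x - F z1 = s1 + t'" using lev0 lev2 levy by simp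
  ultimately have R2: "reeb_rel (smooth_space T (2 * e2)) (smooth_f F) (z0, s0 + t0) (z1, s1 + t')" by simp
  have "smooth_pt T F e2 z1 s1 = smooth_pt T F e2 z' s'"
    using H2 unfolding etamap_def z1_def s1_def by simp
  then have "reeb_rel (smooth_space T e2) (smooth_f F) (z1, s1) (z', s')"
    using smooth_pt_eq[OF r2(1), of s1 e2 F z' s'] r2(2) ee by simp
  then have R3: "reeb_rel (smooth_space T (2 * e2)) (smooth_f F) (z1, s1 + t') (z', s' + t')"
    by (rule rel_shift) (use y'(2) in simp)
  have "reeb_rel (smooth_space T (2 * e2)) (smooth_f F) (x, 0) (z', s' + t')"
    using reeb_rel_trans[OF reeb_rel_trans[OF R1 R2] R3] .
  then have "smooth_pt T F (2 * e2) x 0 = smooth_pt T F (2 * e2) z' (s' + t')"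
    using smooth_pt_eq[OF x, of 0 "2 * e2" F z' "s' + t'"] ee by simp
  then show "smooth_pt T F (2 * e2) z' (s' + t') = smooth_pt T F (2 * e2) x 0" by (rule sym)
qed



lemma pathin_scale:
  assumes "pathin X g" "0 \<le> x" "x \<le> 1"
  shows "pathin X (\<lambda>v. g (x * v))"
proof -
  have "continuous_map (top_of_set {0..1}) (top_of_set {0..1::real}) (\<lambda>v. x * v)"
    using assms(2,3) by (auto intro!: continuous_intros simp: mult_le_one)
  from continuous_map_compose[OF this assms(1)[unfolded pathin_def]]
  show ?thesis unfolding pathin_def o_def .
qed

lemma trunc_mono:
  assumes Fc: "continuous_map X euclideanreal F" and t: "0 \<le> t1" "t1 \<le> t2"
  shows "trunc_set X F t2 \<subseteq> trunc_set X F t1"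
proof
  fix p assume p: "p \<in> trunc_set X F t2"
  have pX: "p \<in> topspace X" using p unfolding trunc_set_def by blast
  obtain gu where gu: "up_path X F gu" "gu 0 = p" "F (gu 1) - F p = t2"
    using p unfolding trunc_set_def by blast
  obtain gd where gd: "down_path X F gd" "gd 0 = p" "F p - F (gd 1) = t2"
    using p unfolding trunc_set_def by blast
  have cont: "continuous_on {0..1} (F \<circ> g)" if "pathin X g" for g
  proof -
    have "continuous_map (top_of_set {0..1}) euclideanreal (F \<circ> g)"
      using continuous_map_compose[OF that[unfolded pathin_def] Fc] .
    then show ?thesis by simp
  qed
  have "\<exists>x. 0 \<le> x \<and> x \<le> 1 \<and> (F \<circ> gu) x = F p + t1"
    by (rule IVT') (use gu t cont[of gu] in \<open>auto simp: up_path_def\<close>)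
  then obtain xu where xu: "0 \<le> xu" "xu \<le> 1" "F (gu xu) = F p + t1" by auto
  have "\<exists>x. 0 \<le> x \<and> x \<le> 1 \<and> (F \<circ> gd) x = F p - t1"
    by (rule IVT2') (use gd t cont[of gd] in \<open>auto simp: down_path_def\<close>)
  then obtain xd where xd: "0 \<le> xd" "xd \<le> 1" "F (gd xd) = F p - t1" by auto
  have U: "up_path X F (\<lambda>v. gu (xu * v))"
    unfolding up_path_def
  proof (intro conjI allI impI)
    show "pathin X (\<lambda>v. gu (xu * v))" using gu(1) xu unfolding up_path_def by (intro pathin_scale) auto
    fix s t :: real assume "0 \<le> s \<and> s \<le> t \<and> t \<le> 1"
    then have "0 \<le> xu * s" "xu * s \<le> xu * t" "xu * t \<le> 1"
      using xu by (auto intro: mult_left_mono mult_le_one)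
    then show "F (gu (xu * s)) \<le> F (gu (xu * t))" using gu(1) unfolding up_path_def by blast
  qed
  have V: "down_path X F (\<lambda>v. gd (xd * v))"
    unfolding down_path_def
  proof (intro conjI allI impI)
    show "pathin X (\<lambda>v. gd (xd * v))" using gd(1) xd unfolding down_path_def by (intro pathin_scale) auto
    fix s t :: real assume "0 \<le> s \<and> s \<le> t \<and> t \<le> 1"
    then have "0 \<le> xd * s" "xd * s \<le> xd * t" "xd * t \<le> 1"
      using xd by (auto intro: mult_left_mono mult_le_one)
    then show "F (gd (xd * t)) \<le> F (gd (xd * s))" using gd(1) unfolding down_path_def by blast
  qed
  show "p \<in> trunc_set X F t1"
    unfolding trunc_set_def using pX U V gu(2) gd(2) xu(3) xd(3) by auto
qed

lemma smooth_fn_cont: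
  assumes "continuous_map T euclideanreal F"
  shows "continuous_map (smooth_top T F e) euclideanreal (smooth_fn T F e)"
  unfolding smooth_top_def smooth_fn_def by (rule reeb_fn_continuous[OF smooth_f_cont[OF assms]])

lemma interleaving_mono:
  assumes "interleaving m2 e T F T' F' phi psi" "0 \<le> m1" "m1 \<le> m2" "0 \<le> e"
    and "continuous_map T euclideanreal F" "continuous_map T' euclideanreal F'"
  shows "interleaving m1 e T F T' F' phi psi"
proof -
  have tm: "to_tsmooth T F T' F' m1 e phi" if "to_tsmooth T F T' F' m2 e phi"
    and Fc': "continuous_map T' euclideanreal F'" for T F T' F' and phi :: "'x \<Rightarrow> ('y \<times> real) set"
  proof -
    have sub: "trunc_set (smooth_top T' F' e) (smooth_fn T' F' e) (m2 * e) \<subseteq> trunc_set (smooth_top T' F' e) (smooth_fn T' F' e) (m1 * e)"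
      by (rule trunc_mono[OF smooth_fn_cont[OF Fc']]) (use assms(2,3,4) in \<open>auto intro: mult_right_mono\<close>)
    show ?thesis using that(1) sub unfolding to_tsmooth_def tsmooth_top_def continuous_map_in_subtopology by blast
  qed
  show ?thesis using assms(1) tm[OF _ assms(6)] tm[OF _ assms(5)] unfolding interleaving_def by blast
qed



lemma lpc_point: "locally_path_connected_space (subtopology euclideanreal {x::real})"
  using locally_path_connected_real_interval(1)[of x x] by simp

lemma constructible_props:
  assumes "constructible TYPE('c) X f"
  shows "locally_path_connected_space X" "continuous_map X euclideanreal f"
proof -
  show "continuous_map X euclideanreal f" using assms unfolding constructible_def by blast
  obtain n a l r h and V E :: "nat \<Rightarrow> 'c topology" where
    c: "\<forall>i<n. compact_space (V i) \<and> locally_path_connected_space (V i)"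
       "\<forall>i. Suc i < n \<longrightarrow> compact_space (E i) \<and> locally_path_connected_space (E i) \<and>
               continuous_map (E i) (V i) (l i) \<and> continuous_map (E i) (V (Suc i)) (r i)"
       "homeomorphic_map X (glued_top n a V E l r) h"
    using assms unfolding constructible_def by blast
  have "locally_path_connected_space (pieces_top n a V E)"
    unfolding pieces_top_def locally_path_connected_space_sum_topology
  proof
    fix ib assume ib: "ib \<in> {(i, False) | i. i < n} \<union> {(i, True) | i. Suc i < n}"
    obtain i b where ibe: "ib = (i, b)" by (cases ib)
    show "locally_path_connected_space
          ((\<lambda>(i, b). if b then prod_topology (E i) (subtopology euclideanreal {a i..a (Suc i)})
                      else prod_topology (V i) (subtopology euclideanreal {a i})) ib)"
    proof (cases b)
      case True
      then have "Suc i < n" using ib ibe by auto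
      then have "locally_path_connected_space (E i)" using c(2) by blast
      then show ?thesis using True ibe locally_path_connected_real_interval(1)
        by (simp add: locally_path_connected_space_prod_topology)
    next
      case False
      then have "i < n" using ib ibe by auto
      then have "locally_path_connected_space (V i)" using c(1) by blast
      then show ?thesis using False ibe lpc_point
        by (simp add: locally_path_connected_space_prod_topology)
    qed
  qed
  then have "locally_path_connected_space (glued_top n a V E l r)"
    unfolding glued_top_def by (rule lpc_quot)
  then show "locally_path_connected_space X"
    using homeomorphic_locally_path_connected_space[OF homeomorphic_map_imp_homeomorphic_space[OF c(3)]] by blast
qed

lemma interleaving_scale:
  assumes lpcT: "locally_path_connected_space T" and lpcT': "locally_path_connected_space T'"
    and Fc: "continuous_map T euclideanreal F" and Fc': "continuous_map T' euclideanreal F'"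
    and m: "0 \<le> M" "M \<le> M'" "M' < 1" and e: "0 \<le> e"
    and I: "interleaving M e T F T' F' phi psi"
  shows "\<exists>phi psi. interleaving M' ((1 - M) / (1 - M') * e) T F T' F' phi psi"
proof (cases "e = 0 \<or> M = M'")
  case True
  then show ?thesis
  proof
    assume e0: "e = 0"
    have "interleaving M' e T F T' F' phi psi" using I unfolding interleaving_def to_tsmooth_def e0 by simp
    moreover have "(1 - M) / (1 - M') * e = e" using e0 by simp
    ultimately show ?thesis by (intro exI[of _ phi] exI[of _ psi]) simp
  next
    assume mm: "M = M'"
    have eq: "(1 - M) / (1 - M') * e = e" using mm m by simp
    have "interleaving M' e T F T' F' phi psi" using I mm by simp
    then show ?thesis unfolding eq by blast
  qed
next
  case False
  then have e0: "0 < e" and mm: "M < M'" using e m by auto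
  define k where "k = (1 - M) / (1 - M')"
  have k1: "1 < k" unfolding k_def using mm m by (simp add: field_simps)
  define e2 where "e2 = k * e"
  have ee2: "e < e2" unfolding e2_def using k1 e0 by simp
  have keq: "M' * e2 = M * e + (e2 - e)"
  proof -
    have "k * (1 - M') = 1 - M" unfolding k_def using m by (simp add: field_simps)
    moreover have "M' * e2 - (M * e + (e2 - e)) = e * ((1 - M) - k * (1 - M'))"
      unfolding e2_def by (simp add: algebra_simps)
    ultimately show ?thesis by simp
  qed
  have p: "to_tsmooth T F T' F' M e phi" and q: "to_tsmooth T' F' T F M e psi"
    and c1: "comp_is_eta T F T' F' e phi psi" and c2: "comp_is_eta T' F' T F e psi phi"
    using I unfolding interleaving_def by auto
  have "interleaving M' e2 T F T' F' (etamap T' F' e2 \<circ> phi) (etamap T F e2 \<circ> psi)"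
    unfolding interleaving_def
  proof (intro conjI)
    show "to_tsmooth T F T' F' M' e2 (etamap T' F' e2 \<circ> phi)"
      by (rule to_tsmooth_eta[OF p]) (use ee2 keq in auto)
    show "to_tsmooth T' F' T F M' e2 (etamap T F e2 \<circ> psi)"
      by (rule to_tsmooth_eta[OF q]) (use ee2 keq in auto)
    show "comp_is_eta T F T' F' e2 (etamap T' F' e2 \<circ> phi) (etamap T F e2 \<circ> psi)"
      by (rule comp_eta[OF lpcT Fc e ee2 p q c1])
    show "comp_is_eta T' F' T F e2 (etamap T F e2 \<circ> psi) (etamap T' F' e2 \<circ> phi)"
      by (rule comp_eta[OF lpcT' Fc' e ee2 q p c2])
  qed
  then show ?thesis unfolding e2_def k_def by blast
qed

theorem mainTheorem2:
  fixes X :: "'a topology" and f :: "'a \<Rightarrow> real"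
    and Y :: "'b topology" and g :: "'b \<Rightarrow> real"
    and M M' :: real
  assumes "constructible TYPE('c) X f"
    and "constructible TYPE('d) Y g"
    and "0 \<le> M" and "M \<le> M'" and "M' < 1"
  shows "trunc_dist M (reeb_top X f) (reeb_fn X f) (reeb_top Y g) (reeb_fn Y g)
           \<le> trunc_dist M' (reeb_top X f) (reeb_fn X f) (reeb_top Y g) (reeb_fn Y g)
       \<and> trunc_dist M' (reeb_top X f) (reeb_fn X f) (reeb_top Y g) (reeb_fn Y g)
           \<le> ereal ((1 - M) / (1 - M'))
              * trunc_dist M (reeb_top X f) (reeb_fn X f) (reeb_top Y g) (reeb_fn Y g)"
proof -
  let ?T = "reeb_top X f" and ?F = "reeb_fn X f" and ?T' = "reeb_top Y g" and ?F' = "reeb_fn Y g"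
  have lX: "locally_path_connected_space X" "continuous_map X euclideanreal f"
    using constructible_props[OF assms(1)] by auto
  have lY: "locally_path_connected_space Y" "continuous_map Y euclideanreal g"
    using constructible_props[OF assms(2)] by auto
  have lpcT: "locally_path_connected_space ?T" unfolding reeb_top_def by (rule lpc_quot[OF lX(1)])
  have lpcT': "locally_path_connected_space ?T'" unfolding reeb_top_def by (rule lpc_quot[OF lY(1)])
  have Fc: "continuous_map ?T euclideanreal ?F" by (rule reeb_fn_continuous[OF lX(2)])
  have Fc': "continuous_map ?T' euclideanreal ?F'" by (rule reeb_fn_continuous[OF lY(2)])
  define D where "D m = {ereal e | e. e \<ge> 0 \<and> (\<exists>phi psi. interleaving m e ?T ?F ?T' ?F' phi psi)}" for m
  have td: "trunc_dist m ?T ?F ?T' ?F' = Inf (D m)" for m unfolding trunc_dist_def D_def ..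
  define k where "k = (1 - M) / (1 - M')"
  have k0: "0 < k" unfolding k_def using assms(3-5) by simp
  have sub: "D M' \<subseteq> D M"
  proof
    fix y assume "y \<in> D M'"
    then obtain e phi psi where y: "y = ereal e" and e0: "e \<ge> 0" and il: "interleaving M' e ?T ?F ?T' ?F' phi psi"
      unfolding D_def by blast
    have "interleaving M e ?T ?F ?T' ?F' phi psi"
      using interleaving_mono[OF il assms(3,4) e0 Fc Fc'] .
    then show "y \<in> D M" unfolding D_def using y e0 by blast
  qed
  have scale: "ereal (k * e) \<in> D M'" if "ereal e \<in> D M" for e
  proof -
    from that obtain e' phi psi where "ereal e = ereal e'" "e' \<ge> 0" "interleaving M e' ?T ?F ?T' ?F' phi psi"
      unfolding D_def by blast
    then have ee: "e \<ge> 0" "interleaving M e ?T ?F ?T' ?F' phi psi" by auto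
    have "\<exists>phi psi. interleaving M' (k * e) ?T ?F ?T' ?F' phi psi"
      unfolding k_def by (rule interleaving_scale[OF lpcT lpcT' Fc Fc' assms(3-5) ee])
    then show ?thesis unfolding D_def using ee(1) k0 by auto
  qed
  have part1: "Inf (D M) \<le> Inf (D M')" by (rule Inf_superset_mono[OF sub])
  have part2: "Inf (D M') \<le> ereal k * Inf (D M)"
  proof (cases "Inf (D M) = \<infinity>")
    case True
    then show ?thesis using k0 by simp
  next
    case False
    have nn: "0 \<le> y" if "y \<in> D M" for y using that unfolding D_def by auto
    have "0 \<le> Inf (D M)" using nn by (rule Inf_greatest)
    with False obtain i where i: "Inf (D M) = ereal i" "0 \<le> i"
      by (cases "Inf (D M)") auto
    show ?thesis
    proof (rule ereal_le_epsilon2)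
      fix \<epsilon> :: real assume \<epsilon>: "0 < \<epsilon>"
      have "Inf (D M) < ereal (i + \<epsilon> / k)" using i \<epsilon> k0 by simp
      then obtain y where y: "y \<in> D M" "y < ereal (i + \<epsilon> / k)" unfolding Inf_less_iff by blast
      then obtain ey where ey: "y = ereal ey" unfolding D_def by blast
      have "Inf (D M') \<le> ereal (k * ey)" using scale y(1) ey by (simp add: Inf_lower)
      also have "\<dots> \<le> ereal (k * i + \<epsilon>)"
      proof -
        have "ey \<le> i + \<epsilon> / k" using y(2) ey by simp
        then have "k * ey \<le> k * (i + \<epsilon> / k)" using k0 by (simp add: mult_left_mono)
        also have "\<dots> = k * i + \<epsilon>" using k0 by (simp add: field_simps)
        finally show ?thesis by simp
      qed
      also have "\<dots> = ereal k * Inf (D M) + ereal \<epsilon>" using i by simp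
      finally show "Inf (D M') \<le> ereal k * Inf (D M) + ereal \<epsilon>" .
    qed
  qed
  show ?thesis using part1 part2 unfolding td k_def by simp
qed


end
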